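(* Suppose Assumptions 1–4 hold, that (i) $E[Y^4]<\infty$, $E\|X\|^4<\infty$ and $E[s(X'\gamma)^4]<\infty$ for all $\gamma\in\Theta_\gamma$, and (ii) there is $(\beta_0,\gamma_0)\in\Theta$ such that, almost surely, $\mu(X)=X'\beta_0$ and $\sigma(X)^2=s(X'\gamma_0)^2$. Then the minimization of $Q(\theta)$ over $\Theta$ is equivalent to the (infeasible) sequential procedure with first step $$\beta_0=\arg\min_{\beta\in\mathbb{R}^k}E\Big[\frac{1}{\sigma(X)}(Y-X'\beta)^2\Big]$$ and second step $$\gamma_0=\arg\min_{\gamma\in\Theta_\gamma}E\Big[\frac{1}{\sigma(X)^3}\big\{(Y-X'\beta_0)^2-s(X'\gamma)^2\big\}^2\Big],$$ in the sense that the first-order conditions of the two steps are satisfied at $(\beta_0,\gamma_0)$ and coincide there with the first-order conditions of the minimization of $Q$, whose unique solution is $(\beta_0,\gamma_0)$.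
   Context: Let $Y$ be a scalar random variable and $X$ a random $k\times1$ vector whose first component equals $1$; let $\mathcal{X}$ denote the support of $X$. Write $\mu(X)=E[Y\mid X]$ and $\sigma(X)^2=E[(Y-\mu(X))^2\mid X]$. Let $s$ be a positive scale function, write $s_j(t)=\partial^j s(t)/\partial t^j$ for $j=1,2,3$, and set $\Theta_\gamma=\{\gamma\in\mathbb{R}^k:\Pr[s(X'\gamma)>0]=1\}$ and $\Theta=\mathbb{R}^k\times\Theta_\gamma$. For $\theta=(\beta,\gamma)\in\Theta$ put $e(Y,X,\theta)=(Y-X'\beta)/s(X'\gamma)$ and $Q(\theta)=E\big[\tfrac12\{e(Y,X,\theta)^2+1\}s(X'\gamma)\big]$. Assumption 1: for $a=0$ or $a=-\infty$, $s:(a,\infty)\to(0,\infty)$ is three times differentiable, strictly increasing and convex, with $\lim_{t\to a}s(t)=0$ and $\lim_{t\to\infty}s(t)=\infty$. Assumption 2: $x\mapsto\sigma(x)^2$ is bounded away from $0$ uniformly on $\mathcal{X}$. Assumption 3: (i) $E[Y^4]<\infty$ and $E\|X\|^4<\infty$; (ii) for all $\gamma\in\Theta_\gamma$, $E[\|X\|^4s_2(X'\gamma)^2]<\infty$, $E[\|X\|^6s_3(X'\gamma)^2]<\infty$ and $E[\|X\|^6s_1(X'\gamma)^2s_2(X'\gamma)^2]<\infty$. Assumption 4: for all $\gamma\in\Theta_\gamma$, $E[XX'/s(X'\gamma)]$ is nonsingular. *)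

theory Defs
  imports "HOL-Probability.Probability"
begin

definition sdom :: "ereal \<Rightarrow> real set" where
  "sdom a = {t. a < ereal t}"

definition assumption1 ::
  "ereal \<Rightarrow> (real \<Rightarrow> real) \<Rightarrow> (real \<Rightarrow> real) \<Rightarrow> (real \<Rightarrow> real) \<Rightarrow> (real \<Rightarrow> real) \<Rightarrow> bool" where
  "assumption1 a s s1 s2 s3 \<longleftrightarrow>
     (a = 0 \<or> a = -\<infinity>) \<and>
     (\<forall>t\<in>sdom a. s t > 0) \<and>
     (\<forall>t\<in>sdom a. (s has_real_derivative s1 t) (at t)) \<and>
     (\<forall>t\<in>sdom a. (s1 has_real_derivative s2 t) (at t)) \<and>
     (\<forall>t\<in>sdom a. (s2 has_real_derivative s3 t) (at t)) \<and>
     strict_mono_on (sdom a) s \<and>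
     convex_on (sdom a) s \<and>
     (if a = 0 then (s \<longlongrightarrow> 0) (at_right 0) else (s \<longlongrightarrow> 0) at_bot) \<and>
     filterlim s at_top at_top"

definition sigX :: "'w measure \<Rightarrow> ('w \<Rightarrow> real^'k) \<Rightarrow> 'w measure" where
  "sigX M X = vimage_algebra (space M) X borel"

definition muX :: "'w measure \<Rightarrow> ('w \<Rightarrow> real^'k) \<Rightarrow> ('w \<Rightarrow> real) \<Rightarrow> 'w \<Rightarrow> real" where
  "muX M X Y = real_cond_exp M (sigX M X) Y"

definition sigma2X :: "'w measure \<Rightarrow> ('w \<Rightarrow> real^'k) \<Rightarrow> ('w \<Rightarrow> real) \<Rightarrow> 'w \<Rightarrow> real" where
  "sigma2X M X Y = real_cond_exp M (sigX M X) (\<lambda>w. (Y w - muX M X Y w)^2)"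

definition sigmaX :: "'w measure \<Rightarrow> ('w \<Rightarrow> real^'k) \<Rightarrow> ('w \<Rightarrow> real) \<Rightarrow> 'w \<Rightarrow> real" where
  "sigmaX M X Y w = sqrt (sigma2X M X Y w)"

definition Theta_gamma :: "'w measure \<Rightarrow> ('w \<Rightarrow> real^'k) \<Rightarrow> ereal \<Rightarrow> (real \<Rightarrow> real) \<Rightarrow> (real^'k) set" where
  "Theta_gamma M X a s =
     {\<gamma>. prob_space.prob M {w \<in> space M. X w \<bullet> \<gamma> \<in> sdom a \<and> s (X w \<bullet> \<gamma>) > 0} = 1}"

definition Theta :: "'w measure \<Rightarrow> ('w \<Rightarrow> real^'k) \<Rightarrow> ereal \<Rightarrow> (real \<Rightarrow> real) \<Rightarrow> ((real^'k) \<times> (real^'k)) set" where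
  "Theta M X a s = UNIV \<times> Theta_gamma M X a s"

text \<open>e(Y,X,theta) and the objective Q(theta) (an extended nonnegative expectation,
  so that Q may take the value infinity).\<close>
definition eres :: "(real \<Rightarrow> real) \<Rightarrow> real \<Rightarrow> real^'k \<Rightarrow> (real^'k) \<times> (real^'k) \<Rightarrow> real" where
  "eres s y x \<theta> = (y - x \<bullet> fst \<theta>) / s (x \<bullet> snd \<theta>)"

definition Qobj :: "'w measure \<Rightarrow> ('w \<Rightarrow> real^'k) \<Rightarrow> ('w \<Rightarrow> real) \<Rightarrow> (real \<Rightarrow> real)
     \<Rightarrow> (real^'k) \<times> (real^'k) \<Rightarrow> ennreal" where
  "Qobj M X Y s \<theta> =
     (\<integral>\<^sup>+ w. ennreal ((1/2) * ((eres s (Y w) (X w) \<theta>)^2 + 1) * s (X w \<bullet> snd \<theta>)) \<partial>M)"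

definition step1obj :: "'w measure \<Rightarrow> ('w \<Rightarrow> real^'k) \<Rightarrow> ('w \<Rightarrow> real) \<Rightarrow> real^'k \<Rightarrow> ennreal" where
  "step1obj M X Y \<beta> =
     (\<integral>\<^sup>+ w. ennreal ((Y w - X w \<bullet> \<beta>)^2 / sigmaX M X Y w) \<partial>M)"

definition step2obj :: "'w measure \<Rightarrow> ('w \<Rightarrow> real^'k) \<Rightarrow> ('w \<Rightarrow> real) \<Rightarrow> (real \<Rightarrow> real)
     \<Rightarrow> real^'k \<Rightarrow> real^'k \<Rightarrow> ennreal" where
  "step2obj M X Y s \<beta> \<gamma> =
     (\<integral>\<^sup>+ w. ennreal (((Y w - X w \<bullet> \<beta>)^2 - (s (X w \<bullet> \<gamma>))^2)^2 / (sigmaX M X Y w)^3) \<partial>M)"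

text \<open>Gradients (first-order conditions), obtained by differentiating under the expectation.\<close>
definition grad_step1 :: "'w measure \<Rightarrow> ('w \<Rightarrow> real^'k) \<Rightarrow> ('w \<Rightarrow> real) \<Rightarrow> real^'k \<Rightarrow> real^'k" where
  "grad_step1 M X Y \<beta> =
     (\<chi> i. \<integral> w. -2 * X w $ i * (Y w - X w \<bullet> \<beta>) / sigmaX M X Y w \<partial>M)"

definition grad_step2 :: "'w measure \<Rightarrow> ('w \<Rightarrow> real^'k) \<Rightarrow> ('w \<Rightarrow> real) \<Rightarrow> (real \<Rightarrow> real) \<Rightarrow> (real \<Rightarrow> real)
     \<Rightarrow> real^'k \<Rightarrow> real^'k \<Rightarrow> real^'k" where
  "grad_step2 M X Y s s1 \<beta> \<gamma> =
     (\<chi> i. \<integral> w. -4 * ((Y w - X w \<bullet> \<beta>)^2 - (s (X w \<bullet> \<gamma>))^2) * s (X w \<bullet> \<gamma>) * s1 (X w \<bullet> \<gamma>)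
                  * X w $ i / (sigmaX M X Y w)^3 \<partial>M)"

definition gradQ_beta :: "'w measure \<Rightarrow> ('w \<Rightarrow> real^'k) \<Rightarrow> ('w \<Rightarrow> real) \<Rightarrow> (real \<Rightarrow> real)
     \<Rightarrow> (real^'k) \<times> (real^'k) \<Rightarrow> real^'k" where
  "gradQ_beta M X Y s \<theta> = (\<chi> i. \<integral> w. - X w $ i * eres s (Y w) (X w) \<theta> \<partial>M)"

definition gradQ_gamma :: "'w measure \<Rightarrow> ('w \<Rightarrow> real^'k) \<Rightarrow> ('w \<Rightarrow> real) \<Rightarrow> (real \<Rightarrow> real) \<Rightarrow> (real \<Rightarrow> real)
     \<Rightarrow> (real^'k) \<times> (real^'k) \<Rightarrow> real^'k" where
  "gradQ_gamma M X Y s s1 \<theta> =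
     (\<chi> i. \<integral> w. (1/2) * (1 - (eres s (Y w) (X w) \<theta>)^2) * s1 (X w \<bullet> snd \<theta>) * X w $ i \<partial>M)"

end

theory Submission
  imports Defs
begin


lemma nn_rce:
  assumes SF: "sigma_finite_subalgebra M F" and fm: "f \<in> borel_measurable F" and fpos: "\<And>x. f x \<ge> 0"
    and gi: "integrable M g" and gpos: "\<And>x. g x \<ge> 0"
  shows "(\<integral>\<^sup>+x. ennreal (f x * g x) \<partial>M) = (\<integral>\<^sup>+x. ennreal (f x * real_cond_exp M F g x) \<partial>M)"
proof -
  interpret sigma_finite_subalgebra M F by (rule SF)
  have gm[measurable]: "g \<in> borel_measurable M" using gi by auto
  have "(\<lambda>x. ennreal (-g x)) = (\<lambda>x. 0)" using gpos by (simp add: ennreal_neg)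
  moreover have "AE x in M. 0 = nn_cond_exp M F (\<lambda>x. 0) x"
    by (rule nn_cond_exp_F_meas, auto)
  ultimately have N0: "AE x in M. nn_cond_exp M F (\<lambda>x. ennreal(-g x)) x = 0" by simp
  have "(\<integral>\<^sup>+x. nn_cond_exp M F (\<lambda>x. ennreal (g x)) x \<partial>M) = (\<integral>\<^sup>+x. ennreal (g x) \<partial>M)"
    using nn_cond_exp_intg[of "\<lambda>_. 1" "\<lambda>x. ennreal (g x)"] by simp
  also have "\<dots> < \<infinity>" using gi gpos by (simp add: integrable_iff_bounded)
  finally have "AE x in M. nn_cond_exp M F (\<lambda>x. ennreal (g x)) x \<noteq> \<infinity>"
    by (intro nn_integral_PInf_AE) auto
  with N0 have E: "AE x in M. ennreal (real_cond_exp M F g x) = nn_cond_exp M F (\<lambda>x. ennreal (g x)) x"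
    by eventually_elim (simp add: real_cond_exp_def ennreal_enn2real_if)
  have "(\<integral>\<^sup>+x. ennreal (f x * real_cond_exp M F g x) \<partial>M) = (\<integral>\<^sup>+x. ennreal (f x) * nn_cond_exp M F (\<lambda>x. ennreal (g x)) x \<partial>M)"
    apply (rule nn_integral_cong_AE) using E by eventually_elim (simp add: ennreal_mult' fpos)
  also have "\<dots> = (\<integral>\<^sup>+x. ennreal (f x) * ennreal (g x) \<partial>M)"
    by (rule nn_cond_exp_intg) (use fm in auto)
  also have "\<dots> = (\<integral>\<^sup>+x. ennreal (f x * g x) \<partial>M)"
    by (simp add: ennreal_mult' fpos)
  finally show ?thesis ..
qed

lemma nn_rce2:
  assumes SF: "sigma_finite_subalgebra M F" and fm: "f \<in> borel_measurable F" and fpos: "\<And>x. f x \<ge> 0"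
    and gi: "integrable M g" and gpos: "\<And>x. g x \<ge> 0"
    and hm[measurable]: "h \<in> borel_measurable M" and hpos: "\<And>x. h x \<ge> 0"
  shows "(\<integral>\<^sup>+x. ennreal (f x * g x + h x) \<partial>M) = (\<integral>\<^sup>+x. ennreal (f x * real_cond_exp M F g x + h x) \<partial>M)"
proof -
  interpret sigma_finite_subalgebra M F by (rule SF)
  have fM[measurable]: "f \<in> borel_measurable M" by (rule measurable_from_subalg[OF subalg fm])
  have gm[measurable]: "g \<in> borel_measurable M" using gi by auto
  have rpos: "AE x in M. 0 \<le> real_cond_exp M F g x"
    by (rule real_cond_exp_pos) (use gpos in auto)
  have "(\<integral>\<^sup>+x. ennreal (f x * g x + h x) \<partial>M) = (\<integral>\<^sup>+x. ennreal (f x * g x) + ennreal (h x) \<partial>M)"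
    by (intro nn_integral_cong) (simp add: ennreal_plus fpos gpos hpos)
  also have "\<dots> = (\<integral>\<^sup>+x. ennreal (f x * g x) \<partial>M) + (\<integral>\<^sup>+x. ennreal (h x) \<partial>M)"
    by (rule nn_integral_add) measurable
  also have "(\<integral>\<^sup>+x. ennreal (f x * g x) \<partial>M) = (\<integral>\<^sup>+x. ennreal (f x * real_cond_exp M F g x) \<partial>M)"
    by (rule nn_rce[OF SF fm fpos gi gpos])
  also have "(\<integral>\<^sup>+x. ennreal (f x * real_cond_exp M F g x) \<partial>M) + (\<integral>\<^sup>+x. ennreal (h x) \<partial>M)
      = (\<integral>\<^sup>+x. ennreal (f x * real_cond_exp M F g x) + ennreal (h x) \<partial>M)"
    by (rule nn_integral_add[symmetric]) measurable
  also have "\<dots> = (\<integral>\<^sup>+x. ennreal (f x * real_cond_exp M F g x + h x) \<partial>M)"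
    by (rule nn_integral_cong_AE) (use rpos in \<open>eventually_elim, simp add: ennreal_plus fpos hpos\<close>)
  finally show ?thesis .
qed



lemma int_zero:
  assumes SF: "sigma_finite_subalgebra M F" and ae: "AE x in M. h x = f x * g x"
    and fm: "f \<in> borel_measurable F" and gm: "g \<in> borel_measurable M"
    and c0: "AE x in M. real_cond_exp M F g x = 0"
  shows "integral\<^sup>L M h = 0"
proof (cases "integrable M h")
  case True
  interpret sigma_finite_subalgebra M F by (rule SF)
  have fM: "f \<in> borel_measurable M" by (rule measurable_from_subalg[OF subalg fm])
  have hm: "h \<in> borel_measurable M" using True by auto
  have i2: "integrable M (\<lambda>x. f x * g x)"
    using integrable_cong_AE_imp[OF True _ ae] fM gm by auto
  have "integral\<^sup>L M h = (\<integral>x. f x * g x \<partial>M)"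
    by (rule integral_cong_AE) (use hm fM gm ae in auto)
  also have "\<dots> = (\<integral>x. f x * real_cond_exp M F g x \<partial>M)"
    by (rule real_cond_exp_intg(2)[symmetric]) (use i2 fm gm in auto)
  also have "\<dots> = 0" by (rule integral_eq_zero_AE) (use c0 in auto)
  finally show ?thesis .
next
  case False
  then show ?thesis by (simp add: not_integrable_integral_eq)
qed

lemma ident:
  fixes X :: "'w \<Rightarrow> real^'k" and q :: "'w \<Rightarrow> real"
  assumes I: "\<forall>i j. integrable M (\<lambda>w. X w $ i * X w $ j / q w)"
    and inv: "invertible (\<chi> i j. \<integral> w. X w $ i * X w $ j / q w \<partial>M)"
    and ae: "AE w in M. X w \<bullet> v = 0"
  shows "v = 0"
proof -
  let ?A = "(\<chi> i j. \<integral> w. X w $ i * X w $ j / q w \<partial>M)"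
  have "?A *v v = 0"
  proof (subst vec_eq_iff, intro allI)
    fix i
    have "(?A *v v) $ i = (\<Sum>j\<in>UNIV. (\<integral> w. X w $ i * X w $ j / q w \<partial>M) * v $ j)"
      by (simp add: matrix_vector_mult_def)
    also have "\<dots> = (\<Sum>j\<in>UNIV. (\<integral> w. X w $ i * X w $ j / q w * v $ j \<partial>M))"
      by (rule sum.cong[OF refl], rule integral_mult_left_zero[symmetric])
    also have "\<dots> = (\<integral> w. (\<Sum>j\<in>UNIV. X w $ i * X w $ j / q w * v $ j) \<partial>M)"
      by (rule Bochner_Integration.integral_sum[where I=UNIV and f="\<lambda>j w. X w $ i * X w $ j / q w * v $ j", symmetric]) (rule integrable_mult_left, use I in blast)
    also have "\<dots> = 0"
    proof (rule integral_eq_zero_AE)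
      show "AE w in M. (\<Sum>j\<in>UNIV. X w $ i * X w $ j / q w * v $ j) = 0"
        using ae
      proof eventually_elim
        case (elim w)
        have "(\<Sum>j\<in>UNIV. X w $ i * X w $ j / q w * v $ j) = X w $ i / q w * (\<Sum>j\<in>UNIV. X w $ j * v $ j)"
          by (simp add: sum_distrib_left algebra_simps)
        also have "(\<Sum>j\<in>UNIV. X w $ j * v $ j) = X w \<bullet> v" by (simp add: inner_vec_def)
        finally show ?case using elim by simp
      qed
    qed
    finally show "(?A *v v) $ i = 0 $ i" by simp
  qed
  moreover have "\<forall>x. ?A *v x = 0 \<longrightarrow> x = 0"
    using inv by (simp add: invertible_left_inverse matrix_left_invertible_ker[symmetric])
  ultimately show ?thesis by blast
qed



lemma sq_ineq1: "\<bar>(a::real) * b\<bar> \<le> a^2 + b^2"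
proof -
  have "0 \<le> (\<bar>a\<bar> - \<bar>b\<bar>)^2" by simp
  then have "2*\<bar>a\<bar>*\<bar>b\<bar> \<le> a^2 + b^2" by (simp add: power2_eq_square algebra_simps)
  moreover have "0 \<le> \<bar>a\<bar>*\<bar>b\<bar>" by simp
  ultimately show ?thesis unfolding abs_mult by linarith
qed

lemma sq_ineq2: "((a::real) + b)^2 \<le> 2*(a^2 + b^2)"
proof -
  have "0 \<le> (a - b)^2" by simp
  then show ?thesis by (simp add: power2_eq_square algebra_simps)
qed

lemma sq_ineq4: "((a::real) + b)^4 \<le> 8*(a^4 + b^4)"
proof -
  have "((a + b)^2)^2 \<le> (2*(a^2 + b^2))^2"
    by (rule power_mono[OF sq_ineq2]) simp
  also have "\<dots> = 4 * (a^2 + b^2)^2" by (simp add: power2_eq_square algebra_simps)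
  also have "(a^2 + b^2)^2 \<le> 2*((a^2)^2 + (b^2)^2)" by (rule sq_ineq2)
  finally show ?thesis by (simp add: power_mult[symmetric])
qed

lemma L2_mult:
  fixes f g :: "'a \<Rightarrow> real"
  assumes i: "integrable M (\<lambda>x. (f x)^2)" "integrable M (\<lambda>x. (g x)^2)"
    and [measurable]: "f \<in> borel_measurable M" "g \<in> borel_measurable M"
  shows "integrable M (\<lambda>x. f x * g x)"
proof (rule Bochner_Integration.integrable_bound[where f="\<lambda>x. (f x)^2 + (g x)^2"])
  show "integrable M (\<lambda>x. (f x)^2 + (g x)^2)" using i by (rule Bochner_Integration.integrable_add)
  show "(\<lambda>x. f x * g x) \<in> borel_measurable M" by measurable
  show "AE x in M. norm (f x * g x) \<le> norm ((f x)^2 + (g x)^2)"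
    by (intro AE_I2) (metis real_norm_def sq_ineq1 abs_ge_self order_trans)
qed

lemma L2_add:
  fixes f g :: "'a \<Rightarrow> real"
  assumes i: "integrable M (\<lambda>x. (f x)^2)" "integrable M (\<lambda>x. (g x)^2)"
    and [measurable]: "f \<in> borel_measurable M" "g \<in> borel_measurable M"
  shows "integrable M (\<lambda>x. (f x + g x)^2)"
proof (rule Bochner_Integration.integrable_bound[where f="\<lambda>x. 2*((f x)^2 + (g x)^2)"])
  show "integrable M (\<lambda>x. 2*((f x)^2 + (g x)^2))" using Bochner_Integration.integrable_add[OF i] by (rule integrable_mult_right)
  show "(\<lambda>x. (f x + g x)^2) \<in> borel_measurable M" by measurable
  show "AE x in M. norm ((f x + g x)^2) \<le> norm (2*((f x)^2 + (g x)^2))"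
    by (intro AE_I2) (metis real_norm_def sq_ineq2 abs_ge_self order_trans zero_le_power2 abs_of_nonneg)
qed

lemma L4_add:
  fixes f g :: "'a \<Rightarrow> real"
  assumes i: "integrable M (\<lambda>x. (f x)^4)" "integrable M (\<lambda>x. (g x)^4)"
    and [measurable]: "f \<in> borel_measurable M" "g \<in> borel_measurable M"
  shows "integrable M (\<lambda>x. (f x + g x)^4)"
proof (rule Bochner_Integration.integrable_bound[where f="\<lambda>x. 8*((f x)^4 + (g x)^4)"])
  show "integrable M (\<lambda>x. 8*((f x)^4 + (g x)^4))" using Bochner_Integration.integrable_add[OF i] by (rule integrable_mult_right)
  show "(\<lambda>x. (f x + g x)^4) \<in> borel_measurable M" by measurable
  have e: "even (4::nat)" by simp
  show "AE x in M. norm ((f x + g x)^4) \<le> norm (8*((f x)^4 + (g x)^4))"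
    by (intro AE_I2) (metis real_norm_def sq_ineq4 abs_ge_self order_trans zero_le_even_power[OF e] abs_of_nonneg)
qed

lemma L2_L1:
  fixes f :: "'a \<Rightarrow> real"
  assumes "finite_measure M" and i: "integrable M (\<lambda>x. (f x)^2)" and [measurable]: "f \<in> borel_measurable M"
  shows "integrable M f"
proof -
  interpret finite_measure M by fact
  have b: "\<bar>t\<bar> \<le> 1 + t^2" for t :: real
  proof -
    have "0 \<le> (\<bar>t\<bar> - 1)^2" by simp
    then have "2*\<bar>t\<bar> \<le> 1 + t^2" by (simp add: power2_eq_square algebra_simps)
    then show ?thesis by simp
  qed
  show ?thesis
  proof (rule Bochner_Integration.integrable_bound[where f="\<lambda>x. 1 + (f x)^2"])
    show "integrable M (\<lambda>x. 1 + (f x)^2)" using i by (intro Bochner_Integration.integrable_add) auto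
    show "f \<in> borel_measurable M" by measurable
    show "AE x in M. norm (f x) \<le> norm (1 + (f x)^2)"
      by (intro AE_I2) (metis real_norm_def b abs_ge_self order_trans)
  qed
qed

lemma L4_L2:
  fixes f :: "'a \<Rightarrow> real"
  assumes "finite_measure M" "integrable M (\<lambda>x. (f x)^4)" "f \<in> borel_measurable M"
  shows "integrable M (\<lambda>x. (f x)^2)"
proof -
  have "integrable M (\<lambda>x. ((f x)^2)^2)" using assms(2) by (simp add: power_mult[symmetric])
  then show ?thesis using L2_L1[OF assms(1), of "\<lambda>x. (f x)^2"] assms(3) by simp
qed

lemma nn_strict:
  fixes f g :: "'a \<Rightarrow> real"
  assumes [measurable]: "f \<in> borel_measurable M" "g \<in> borel_measurable M"
    and fi: "integrable M f" and f0: "AE x in M. 0 \<le> f x" and fg: "AE x in M. f x \<le> g x"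
    and ne: "\<not> (AE x in M. g x \<le> f x)"
  shows "(\<integral>\<^sup>+x. ennreal (f x) \<partial>M) < (\<integral>\<^sup>+x. ennreal (g x) \<partial>M)"
proof (rule nn_integral_less)
  show "(\<lambda>x. ennreal (f x)) \<in> borel_measurable M" "(\<lambda>x. ennreal (g x)) \<in> borel_measurable M" by measurable
  show "(\<integral>\<^sup>+x. ennreal (f x) \<partial>M) \<noteq> \<infinity>" using nn_integral_eq_integral[OF fi f0] by simp
  show "AE x in M. ennreal (f x) \<le> ennreal (g x)" using fg by eventually_elim (rule ennreal_leI)
  show "\<not> (AE x in M. ennreal (g x) \<le> ennreal (f x))"
  proof
    assume "AE x in M. ennreal (g x) \<le> ennreal (f x)"
    with f0 have "AE x in M. g x \<le> f x" by eventually_elim (simp add: ennreal_le_iff)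
    with ne show False by blast
  qed
qed


theorem proposition1:
  fixes M :: "'w measure"
    and Y :: "'w \<Rightarrow> real"
    and X :: "'w \<Rightarrow> real^'k"
    and i1 :: 'k
    and a :: ereal
    and s s1 s2 s3 :: "real \<Rightarrow> real"
    and \<beta>0 \<gamma>0 :: "real^'k"
  assumes P: "prob_space M"
    and Ymeas: "Y \<in> borel_measurable M"
    and Xmeas: "X \<in> borel_measurable M"
    and X1: "\<forall>w\<in>space M. X w $ i1 = 1"
    \<comment> \<open>Assumption 1\<close>
    and A1: "assumption1 a s s1 s2 s3"
    \<comment> \<open>Assumption 2\<close>
    and A2: "\<exists>c>0. AE w in M. sigma2X M X Y w \<ge> c"
    \<comment> \<open>Assumption 3 (i) and hypothesis (i)\<close>
    and A3i_Y: "integrable M (\<lambda>w. (Y w)^4)"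
    and A3i_X: "integrable M (\<lambda>w. (norm (X w))^4)"
    \<comment> \<open>Assumption 3 (ii)\<close>
    and A3ii: "\<forall>\<gamma>\<in>Theta_gamma M X a s.
         integrable M (\<lambda>w. (norm (X w))^4 * (s2 (X w \<bullet> \<gamma>))^2) \<and>
         integrable M (\<lambda>w. (norm (X w))^6 * (s3 (X w \<bullet> \<gamma>))^2) \<and>
         integrable M (\<lambda>w. (norm (X w))^6 * (s1 (X w \<bullet> \<gamma>))^2 * (s2 (X w \<bullet> \<gamma>))^2)"
    \<comment> \<open>Assumption 4: E[XX'/s(X'gamma)] exists and is nonsingular\<close>
    and A4: "\<forall>\<gamma>\<in>Theta_gamma M X a s.
         (\<forall>i j. integrable M (\<lambda>w. X w $ i * X w $ j / s (X w \<bullet> \<gamma>))) \<and>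
         invertible (\<chi> i j. \<integral> w. X w $ i * X w $ j / s (X w \<bullet> \<gamma>) \<partial>M)"
    \<comment> \<open>hypothesis (i): E[s(X'gamma)^4] finite\<close>
    and Hs4: "\<forall>\<gamma>\<in>Theta_gamma M X a s. integrable M (\<lambda>w. (s (X w \<bullet> \<gamma>))^4)"
    \<comment> \<open>hypothesis (ii)\<close>
    and H0: "(\<beta>0, \<gamma>0) \<in> Theta M X a s"
    and Hmu: "AE w in M. muX M X Y w = X w \<bullet> \<beta>0"
    and Hsig: "AE w in M. sigma2X M X Y w = (s (X w \<bullet> \<gamma>0))^2"
  shows
    \<comment> \<open>(beta0, gamma0) is the unique minimiser of Q over Theta\<close>
    "(\<forall>\<theta>\<in>Theta M X a s. \<theta> \<noteq> (\<beta>0, \<gamma>0) \<longrightarrow> Qobj M X Y s (\<beta>0, \<gamma>0) < Qobj M X Y s \<theta>)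
     \<comment> \<open>first step: beta0 = argmin over R^k\<close>
     \<and> (\<forall>\<beta>. \<beta> \<noteq> \<beta>0 \<longrightarrow> step1obj M X Y \<beta>0 < step1obj M X Y \<beta>)
     \<comment> \<open>second step: gamma0 = argmin over Theta_gamma\<close>
     \<and> (\<forall>\<gamma>\<in>Theta_gamma M X a s. \<gamma> \<noteq> \<gamma>0 \<longrightarrow> step2obj M X Y s \<beta>0 \<gamma>0 < step2obj M X Y s \<beta>0 \<gamma>)
     \<comment> \<open>first-order conditions of both steps hold at (beta0, gamma0)\<close>
     \<and> grad_step1 M X Y \<beta>0 = 0
     \<and> grad_step2 M X Y s s1 \<beta>0 \<gamma>0 = 0
     \<comment> \<open>and coincide there with the first-order conditions of Q\<close>
     \<and> gradQ_beta M X Y s (\<beta>0, \<gamma>0) = (1/2) *\<^sub>R grad_step1 M X Y \<beta>0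
     \<and> gradQ_gamma M X Y s s1 (\<beta>0, \<gamma>0) = (1/8) *\<^sub>R grad_step2 M X Y s s1 \<beta>0 \<gamma>0"
proof -
  interpret prob_space M by (rule P)
  define F where "F = sigX M X"
  have subF: "subalgebra M F"
    unfolding subalgebra_def F_def sigX_def
    using sets_image_in_sets[OF refl Xmeas] by simp
  have SF: "sigma_finite_subalgebra M F"
    by (rule finite_measure_subalgebra_is_sigma_finite)
       (simp add: finite_measure_subalgebra_def finite_measure_subalgebra_axioms_def subF finite_measure_axioms)
  interpret sigma_finite_subalgebra M F by (rule SF)
  have XF[measurable]: "X \<in> borel_measurable F" unfolding F_def sigX_def
    by (rule measurable_vimage_algebra1) simp
  note Ymeas[measurable] Xmeas[measurable]
  from A1 have adom: "a = 0 \<or> a = -\<infinity>" and spos: "\<forall>t\<in>sdom a. s t > 0"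
    and sd: "\<forall>t\<in>sdom a. (s has_real_derivative s1 t) (at t)"
    and s1d: "\<forall>t\<in>sdom a. (s1 has_real_derivative s2 t) (at t)"
    and smono: "strict_mono_on (sdom a) s"
    unfolding assumption1_def by auto
  have sdom_open: "open (sdom a)"
    using adom by (auto simp: sdom_def intro!: open_Collect_less continuous_intros)
  have scont: "continuous_on (sdom a) s"
    using sd by (meson DERIV_isCont continuous_at_imp_continuous_on)
  have s1cont: "continuous_on (sdom a) s1"
    using s1d by (meson DERIV_isCont continuous_at_imp_continuous_on)
  define sm where "sm t = (if t \<in> sdom a then s t else 1)" for t
  define s1m where "s1m t = (if t \<in> sdom a then s1 t else 1)" for t
  have smb[measurable]: "sm \<in> borel_measurable borel"
    unfolding sm_def[abs_def]
    by (rule borel_measurable_continuous_on_if) (use sdom_open scont in auto)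
  have s1mb[measurable]: "s1m \<in> borel_measurable borel"
    unfolding s1m_def[abs_def]
    by (rule borel_measurable_continuous_on_if) (use sdom_open s1cont in auto)
  have smpos: "sm t > 0" for t using spos by (simp add: sm_def)
  define SG where "SG \<gamma> w = sm (X w \<bullet> \<gamma>)" for \<gamma> w
  have SGF[measurable]: "SG \<gamma> \<in> borel_measurable F" for \<gamma>
    unfolding SG_def[abs_def] by measurable
  have SGM[measurable]: "SG \<gamma> \<in> borel_measurable M" for \<gamma>
    by (rule measurable_from_subalg[OF subalg SGF])
  have SGpos: "SG \<gamma> w > 0" for \<gamma> w by (simp add: SG_def smpos)
  have ThG: "AE w in M. X w \<bullet> \<gamma> \<in> sdom a" if "\<gamma> \<in> Theta_gamma M X a s" for \<gamma>
  proof -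
    have "prob {w \<in> space M. X w \<bullet> \<gamma> \<in> sdom a \<and> s (X w \<bullet> \<gamma>) > 0} = 1"
      using that by (simp add: Theta_gamma_def)
    from AE_prob_1[OF this] show ?thesis by auto
  qed
  have sSG: "AE w in M. s (X w \<bullet> \<gamma>) = SG \<gamma> w" if "\<gamma> \<in> Theta_gamma M X a s" for \<gamma>
    using ThG[OF that] by eventually_elim (simp add: SG_def sm_def)
  have g0: "\<gamma>0 \<in> Theta_gamma M X a s" using H0 by (simp add: Theta_def)
  define s0 where "s0 = SG \<gamma>0"
  have s0F[measurable]: "s0 \<in> borel_measurable F" and s0M[measurable]: "s0 \<in> borel_measurable M"
    unfolding s0_def by measurable
  have s0pos: "s0 w > 0" for w by (simp add: s0_def SGpos)
  have ident0: "v = 0" if "AE w in M. X w \<bullet> v = 0" for v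
    using A4 g0 ident[OF _ _ that, of "\<lambda>w. s (X w \<bullet> \<gamma>0)"] by blast
  have IDG: "\<gamma> = \<gamma>0" if g: "\<gamma> \<in> Theta_gamma M X a s" and e: "AE w in M. SG \<gamma> w = s0 w" for \<gamma>
  proof -
    have "AE w in M. X w \<bullet> (\<gamma> - \<gamma>0) = 0"
      using ThG[OF g] ThG[OF g0] e
    proof eventually_elim
      case (elim w)
      then have "s (X w \<bullet> \<gamma>) = s (X w \<bullet> \<gamma>0)" by (simp add: s0_def SG_def sm_def)
      with elim strict_mono_on_imp_inj_on[OF smono] have "X w \<bullet> \<gamma> = X w \<bullet> \<gamma>0"
        by (meson inj_onD)
      then show ?case by (simp add: inner_diff_right)
    qed
    then have "\<gamma> - \<gamma>0 = 0" by (rule ident0)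
    then show ?thesis by simp
  qed

  have sigX0: "AE w in M. sigmaX M X Y w = s0 w"
    using Hsig sSG[OF g0]
    by eventually_elim (simp add: sigmaX_def s0_def SGpos less_imp_le)
  obtain c where c0: "c > 0" and cb: "AE w in M. sigma2X M X Y w \<ge> c" using A2 by blast
  define c' where "c' = sqrt c"
  have c'0: "c' > 0" using c0 by (simp add: c'_def)
  have s0c: "AE w in M. s0 w \<ge> c'"
    using cb Hsig sSG[OF g0]
  proof eventually_elim
    case (elim w)
    then have "c \<le> (s0 w)^2" by (simp add: s0_def)
    then have "sqrt c \<le> sqrt ((s0 w)^2)" by (rule real_sqrt_le_mono)
    then show ?case using s0pos[of w] by (simp add: c'_def)
  qed
  have FM: "finite_measure M" by (rule finite_measure_axioms)
  have Y2: "integrable M (\<lambda>w. (Y w)^2)" by (rule L4_L2[OF FM A3i_Y Ymeas])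
  have Y1: "integrable M Y" by (rule L2_L1[OF FM Y2 Ymeas])
  have Xv4: "integrable M (\<lambda>w. (X w \<bullet> v)^4)" for v
  proof (rule Bochner_Integration.integrable_bound[where f="\<lambda>w. (norm (X w))^4 * (norm v)^4"])
    show "integrable M (\<lambda>w. (norm (X w))^4 * (norm v)^4)" using A3i_X by simp
    show "(\<lambda>w. (X w \<bullet> v)^4) \<in> borel_measurable M" by measurable
    show "AE w in M. norm ((X w \<bullet> v)^4) \<le> norm ((norm (X w))^4 * (norm v)^4)"
    proof (intro AE_I2)
      fix w
      have "\<bar>X w \<bullet> v\<bar>^4 \<le> (norm (X w) * norm v)^4"
        by (rule power_mono[OF Cauchy_Schwarz_ineq2]) simp
      then show "norm ((X w \<bullet> v)^4) \<le> norm ((norm (X w))^4 * (norm v)^4)"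
        by (simp add: power_abs power_mult_distrib)
    qed
  qed
  have Xv2: "integrable M (\<lambda>w. (X w \<bullet> v)^2)" for v by (rule L4_L2[OF FM Xv4]) measurable
  have Xv1: "integrable M (\<lambda>w. X w \<bullet> v)" for v by (rule L2_L1[OF FM Xv2]) measurable
  define e0 where "e0 w = Y w - X w \<bullet> \<beta>0" for w
  have e0M[measurable]: "e0 \<in> borel_measurable M" unfolding e0_def[abs_def] by measurable
  have e04: "integrable M (\<lambda>w. (e0 w)^4)"
    using L4_add[OF A3i_Y Xv4[of "-\<beta>0"] Ymeas] by (simp add: e0_def inner_minus_right)
  have e02: "integrable M (\<lambda>w. (e0 w)^2)" by (rule L4_L2[OF FM e04 e0M])
  have e01: "integrable M e0" by (rule L2_L1[OF FM e02 e0M])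
  have u2: "integrable M (\<lambda>w. ((e0 w)^2)^2)" using e04 by (simp add: power_mult[symmetric])
  have Sg4: "integrable M (\<lambda>w. (SG \<gamma> w)^4)" if "\<gamma> \<in> Theta_gamma M X a s" for \<gamma>
    using Hs4 that sSG[OF that] by (subst integrable_cong_AE[where g="\<lambda>w. (s (X w \<bullet> \<gamma>))^4"]) (auto elim: AE_mp)
  have Sg2: "integrable M (\<lambda>w. ((SG \<gamma> w)^2)^2)" if "\<gamma> \<in> Theta_gamma M X a s" for \<gamma>
    using Sg4[OF that] by (simp add: power_mult[symmetric])
  have s04: "integrable M (\<lambda>w. (s0 w)^4)" using Sg4[OF g0] by (simp add: s0_def)
  have s02: "integrable M (\<lambda>w. (s0 w)^2)" by (rule L4_L2[OF FM s04 s0M])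
  have s01: "integrable M s0" by (rule L2_L1[OF FM s02 s0M])

  have muM[measurable]: "muX M X Y \<in> borel_measurable M" unfolding muX_def by (rule borel_measurable_cond_exp2)
  have muE: "muX M X Y = real_cond_exp M F Y" by (simp add: muX_def F_def)
  have e0eq: "e0 = (\<lambda>w. Y w - X w \<bullet> \<beta>0)" by (simp add: e0_def fun_eq_iff)
  have XvF[measurable]: "(\<lambda>w. X w \<bullet> v) \<in> borel_measurable F" for v by measurable
  have CE0: "AE w in M. real_cond_exp M F e0 w = 0"
    using real_cond_exp_diff[OF Y1 Xv1[of \<beta>0]] real_cond_exp_F_meas[OF Xv1[of \<beta>0] XvF[of \<beta>0]] Hmu
    by eventually_elim (simp add: e0eq muE)
  have CEu: "AE w in M. real_cond_exp M F (\<lambda>w. (e0 w)^2) w = (s0 w)^2"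
  proof -
    have Z: "AE w in M. real_cond_exp M F (\<lambda>w. (Y w - muX M X Y w)^2) w = real_cond_exp M F (\<lambda>w. (e0 w)^2) w"
      by (rule real_cond_exp_cong) (use Hmu in \<open>auto simp: e0_def elim: AE_mp\<close>)
    have eqS: "sigma2X M X Y = real_cond_exp M F (\<lambda>w. (Y w - muX M X Y w)^2)"
      by (simp add: sigma2X_def F_def)
    show ?thesis using Z Hsig sSG[OF g0]
      by eventually_elim (simp add: s0_def eqS)
  qed
  have CEb: "AE w in M. real_cond_exp M F (\<lambda>w. (Y w - X w \<bullet> \<beta>)^2) w = (s0 w)^2 + (X w \<bullet> (\<beta>0 - \<beta>))^2" for \<beta>
  proof -
    define d where "d = \<beta>0 - \<beta>"
    have fe: "(\<lambda>w. (Y w - X w \<bullet> \<beta>)^2) = (\<lambda>w. (e0 w)^2 + (X w \<bullet> d) * (2 * e0 w + X w \<bullet> d))"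
    proof (rule ext)
      fix w
      have "Y w - X w \<bullet> \<beta> = e0 w + X w \<bullet> d" by (simp add: e0_def d_def inner_diff_right)
      then show "(Y w - X w \<bullet> \<beta>)^2 = (e0 w)^2 + (X w \<bullet> d) * (2 * e0 w + X w \<bullet> d)"
        by (simp add: power2_eq_square algebra_simps)
    qed
    have i2e: "integrable M (\<lambda>w. (2 * e0 w)^2)" using e02 by (simp add: power_mult_distrib)
    have i3: "integrable M (\<lambda>w. (2 * e0 w + X w \<bullet> d)^2)"
      by (rule L2_add[OF i2e Xv2]) measurable
    have i4: "integrable M (\<lambda>w. (X w \<bullet> d) * (2 * e0 w + X w \<bullet> d))"
      by (rule L2_mult[OF Xv2 i3]) measurable
    have i5: "integrable M (\<lambda>w. 2 * e0 w)" using e01 by simp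
    have A: "AE w in M. real_cond_exp M F (\<lambda>w. (e0 w)^2 + (X w \<bullet> d) * (2 * e0 w + X w \<bullet> d)) w
       = real_cond_exp M F (\<lambda>w. (e0 w)^2) w + real_cond_exp M F (\<lambda>w. (X w \<bullet> d) * (2 * e0 w + X w \<bullet> d)) w"
      by (rule real_cond_exp_add[OF e02 i4])
    have B: "AE w in M. real_cond_exp M F (\<lambda>w. (X w \<bullet> d) * (2 * e0 w + X w \<bullet> d)) w
       = (X w \<bullet> d) * real_cond_exp M F (\<lambda>w. 2 * e0 w + X w \<bullet> d) w"
      by (rule real_cond_exp_mult) (use i4 in auto)
    have C: "AE w in M. real_cond_exp M F (\<lambda>w. 2 * e0 w + X w \<bullet> d) w
       = real_cond_exp M F (\<lambda>w. 2 * e0 w) w + real_cond_exp M F (\<lambda>w. X w \<bullet> d) w"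
      by (rule real_cond_exp_add[OF i5 Xv1])
    have D: "AE w in M. real_cond_exp M F (\<lambda>w. 2 * e0 w) w = 2 * real_cond_exp M F e0 w"
      by (rule real_cond_exp_cmult[OF e01])
    have E: "AE w in M. real_cond_exp M F (\<lambda>w. X w \<bullet> d) w = X w \<bullet> d"
      by (rule real_cond_exp_F_meas[OF Xv1]) measurable
    show ?thesis unfolding fe using A B C D E CE0 CEu
      by eventually_elim (simp add: d_def power2_eq_square)
  qed
  define W where "W = real_cond_exp M F (\<lambda>w. ((e0 w)^2 - (s0 w)^2)^2)"
  have WM[measurable]: "W \<in> borel_measurable M" unfolding W_def by (rule borel_measurable_cond_exp2)
  have WF[measurable]: "W \<in> borel_measurable F" unfolding W_def by (rule borel_measurable_cond_exp)
  have Wpos: "AE w in M. W w \<ge> 0" unfolding W_def by (rule real_cond_exp_pos) auto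
  have q2: "integrable M (\<lambda>w. ((e0 w)^2 - (s0 w)^2)^2)"
    using L2_add[OF u2, of "\<lambda>w. -((s0 w)^2)"] s04 by (simp add: power_mult[symmetric])
  have Wi: "integrable M W" unfolding W_def by (rule real_cond_exp_int(1)[OF q2])
  have CE2: "AE w in M. real_cond_exp M F (\<lambda>w. ((e0 w)^2 - (SG \<gamma> w)^2)^2) w = W w + ((s0 w)^2 - (SG \<gamma> w)^2)^2"
    if g: "\<gamma> \<in> Theta_gamma M X a s" for \<gamma>
  proof -
    define q where "q w = (e0 w)^2 - (s0 w)^2" for w
    define p where "p w = (s0 w)^2 - (SG \<gamma> w)^2" for w
    have qM[measurable]: "q \<in> borel_measurable M" unfolding q_def[abs_def] by measurable
    have pF[measurable]: "p \<in> borel_measurable F" unfolding p_def[abs_def] by measurable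
    have pM[measurable]: "p \<in> borel_measurable M" unfolding p_def[abs_def] by measurable
    have fe: "(\<lambda>w. ((e0 w)^2 - (SG \<gamma> w)^2)^2) = (\<lambda>w. (q w)^2 + p w * (2 * q w + p w))"
      by (rule ext) (simp add: q_def p_def power2_eq_square algebra_simps)
    have qq: "integrable M (\<lambda>w. (q w)^2)" using q2 by (simp add: q_def)
    have pp: "integrable M (\<lambda>w. (p w)^2)"
    proof -
      have s0sq: "integrable M (\<lambda>w. ((s0 w)^2)^2)" using s04 by (simp add: power_mult[symmetric])
      have "integrable M (\<lambda>w. ((s0 w)^2 + -((SG \<gamma> w)^2))^2)"
        by (rule L2_add[OF s0sq]) (use Sg2[OF g] in auto)
      then show ?thesis by (simp add: p_def)
    qed
    have q1: "integrable M q" by (rule L2_L1[OF FM qq qM])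
    have i2q: "integrable M (\<lambda>w. (2 * q w)^2)" using qq by (simp add: power_mult_distrib)
    have i3: "integrable M (\<lambda>w. (2 * q w + p w)^2)" by (rule L2_add[OF i2q pp]) measurable
    have i4: "integrable M (\<lambda>w. p w * (2 * q w + p w))" by (rule L2_mult[OF pp i3]) measurable
    have i5: "integrable M (\<lambda>w. 2 * q w)" using q1 by simp
    have p1: "integrable M p" by (rule L2_L1[OF FM pp pM])
    have A: "AE w in M. real_cond_exp M F (\<lambda>w. (q w)^2 + p w * (2 * q w + p w)) w
       = W w + real_cond_exp M F (\<lambda>w. p w * (2 * q w + p w)) w"
      using real_cond_exp_add[OF qq i4] by (simp add: W_def q_def)
    have B: "AE w in M. real_cond_exp M F (\<lambda>w. p w * (2 * q w + p w)) w
       = p w * real_cond_exp M F (\<lambda>w. 2 * q w + p w) w"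
      by (rule real_cond_exp_mult) (use i4 in auto)
    have C: "AE w in M. real_cond_exp M F (\<lambda>w. 2 * q w + p w) w
       = real_cond_exp M F (\<lambda>w. 2 * q w) w + real_cond_exp M F p w"
      by (rule real_cond_exp_add[OF i5 p1])
    have D: "AE w in M. real_cond_exp M F (\<lambda>w. 2 * q w) w = 2 * real_cond_exp M F q w"
      by (rule real_cond_exp_cmult[OF q1])
    have E: "AE w in M. real_cond_exp M F p w = p w"
      by (rule real_cond_exp_F_meas[OF p1 pF])
    have G: "AE w in M. real_cond_exp M F q w = 0"
    proof -
      have "q = (\<lambda>w. (e0 w)^2 - (s0 w)^2)" by (simp add: q_def fun_eq_iff)
      moreover have "AE w in M. real_cond_exp M F (\<lambda>w. (s0 w)^2) w = (s0 w)^2"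
        by (rule real_cond_exp_F_meas[OF s02]) measurable
      ultimately show ?thesis using real_cond_exp_diff[OF e02 s02] CEu
        by (auto elim: AE_mp)
    qed
    show ?thesis unfolding fe using A B C D E G
      by eventually_elim (simp add: p_def power2_eq_square)
  qed

  have s0iF[measurable]: "(\<lambda>w. 1 / s0 w) \<in> borel_measurable F" by measurable
  have ib: "integrable M (\<lambda>w. (Y w - X w \<bullet> \<beta>)^2)" for \<beta>
  proof -
    have "integrable M (\<lambda>w. (e0 w + X w \<bullet> (\<beta>0 - \<beta>))^2)" by (rule L2_add[OF e02 Xv2]) measurable
    moreover have "(\<lambda>w. (e0 w + X w \<bullet> (\<beta>0 - \<beta>))^2) = (\<lambda>w. (Y w - X w \<bullet> \<beta>)^2)"
      by (simp add: fun_eq_iff e0_def inner_diff_right)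
    ultimately show ?thesis by simp
  qed
  have OBJ1: "step1obj M X Y \<beta> = (\<integral>\<^sup>+w. ennreal ((1 / s0 w) * ((s0 w)^2 + (X w \<bullet> (\<beta>0 - \<beta>))^2)) \<partial>M)" for \<beta>
  proof -
    have "step1obj M X Y \<beta> = (\<integral>\<^sup>+w. ennreal ((1 / s0 w) * (Y w - X w \<bullet> \<beta>)^2) \<partial>M)"
      unfolding step1obj_def by (rule nn_integral_cong_AE) (use sigX0 in \<open>eventually_elim, simp\<close>)
    also have "\<dots> = (\<integral>\<^sup>+w. ennreal ((1 / s0 w) * real_cond_exp M F (\<lambda>w. (Y w - X w \<bullet> \<beta>)^2) w) \<partial>M)"
      by (rule nn_rce[OF SF s0iF _ ib]) (simp_all add: s0pos less_imp_le)
    also have "\<dots> = (\<integral>\<^sup>+w. ennreal ((1 / s0 w) * ((s0 w)^2 + (X w \<bullet> (\<beta>0 - \<beta>))^2)) \<partial>M)"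
      by (rule nn_integral_cong_AE) (use CEb[of \<beta>] in \<open>eventually_elim, simp\<close>)
    finally show ?thesis .
  qed
  have OBJQ: "Qobj M X Y s (\<beta>, \<gamma>) = (\<integral>\<^sup>+w. ennreal ((1 / (2 * SG \<gamma> w)) * ((s0 w)^2 + (X w \<bullet> (\<beta>0 - \<beta>))^2) + SG \<gamma> w / 2) \<partial>M)"
    if g: "\<gamma> \<in> Theta_gamma M X a s" for \<beta> \<gamma>
  proof -
    have fF: "(\<lambda>w. 1 / (2 * SG \<gamma> w)) \<in> borel_measurable F" by measurable
    have "Qobj M X Y s (\<beta>, \<gamma>) = (\<integral>\<^sup>+w. ennreal ((1 / (2 * SG \<gamma> w)) * (Y w - X w \<bullet> \<beta>)^2 + SG \<gamma> w / 2) \<partial>M)"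
      unfolding Qobj_def eres_def
    proof (rule nn_integral_cong_AE)
      show "AE w in M. ennreal (1 / 2 * (((Y w - X w \<bullet> fst (\<beta>, \<gamma>)) / s (X w \<bullet> snd (\<beta>, \<gamma>)))^2 + 1) * s (X w \<bullet> snd (\<beta>, \<gamma>)))
         = ennreal ((1 / (2 * SG \<gamma> w)) * (Y w - X w \<bullet> \<beta>)^2 + SG \<gamma> w / 2)"
        using sSG[OF g]
      proof eventually_elim
        case (elim w)
        have alg: "1/2 * (((r::real)/S)^2 + 1) * S = (1/(2*S)) * r^2 + S/2" if "S > 0" for r S
          using that by (simp add: power_divide) (simp add: field_simps power2_eq_square)
        have "1/2 * (((Y w - X w \<bullet> \<beta>)/s (X w \<bullet> \<gamma>))^2 + 1) * s (X w \<bullet> \<gamma>) = (1/(2*SG \<gamma> w)) * (Y w - X w \<bullet> \<beta>)^2 + SG \<gamma> w/2"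
          unfolding elim by (rule alg[OF SGpos])
        then show ?case by (simp only: fst_conv snd_conv)
      qed
    qed
    also have "\<dots> = (\<integral>\<^sup>+w. ennreal ((1 / (2 * SG \<gamma> w)) * real_cond_exp M F (\<lambda>w. (Y w - X w \<bullet> \<beta>)^2) w + SG \<gamma> w / 2) \<partial>M)"
      by (rule nn_rce2[OF SF fF _ ib]) (simp_all add: SGpos less_imp_le)
    also have "\<dots> = (\<integral>\<^sup>+w. ennreal ((1 / (2 * SG \<gamma> w)) * ((s0 w)^2 + (X w \<bullet> (\<beta>0 - \<beta>))^2) + SG \<gamma> w / 2) \<partial>M)"
      by (rule nn_integral_cong_AE) (use CEb[of \<beta>] in \<open>eventually_elim, simp\<close>)
    finally show ?thesis .
  qed
  have OBJ2: "step2obj M X Y s \<beta>0 \<gamma> = (\<integral>\<^sup>+w. ennreal ((1 / (s0 w)^3) * (W w + ((s0 w)^2 - (SG \<gamma> w)^2)^2)) \<partial>M)"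
    if g: "\<gamma> \<in> Theta_gamma M X a s" for \<gamma>
  proof -
    have fF: "(\<lambda>w. 1 / (s0 w)^3) \<in> borel_measurable F" by measurable
    have gi: "integrable M (\<lambda>w. ((e0 w)^2 - (SG \<gamma> w)^2)^2)"
      using L2_add[OF u2, of "\<lambda>w. -((SG \<gamma> w)^2)"] Sg2[OF g] by simp
    have "step2obj M X Y s \<beta>0 \<gamma> = (\<integral>\<^sup>+w. ennreal ((1 / (s0 w)^3) * ((e0 w)^2 - (SG \<gamma> w)^2)^2) \<partial>M)"
      unfolding step2obj_def by (rule nn_integral_cong_AE) (use sigX0 sSG[OF g] in \<open>eventually_elim, simp add: e0_def\<close>)
    also have "\<dots> = (\<integral>\<^sup>+w. ennreal ((1 / (s0 w)^3) * real_cond_exp M F (\<lambda>w. ((e0 w)^2 - (SG \<gamma> w)^2)^2) w) \<partial>M)"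
      by (rule nn_rce[OF SF fF _ gi]) (simp_all add: s0pos less_imp_le)
    also have "\<dots> = (\<integral>\<^sup>+w. ennreal ((1 / (s0 w)^3) * (W w + ((s0 w)^2 - (SG \<gamma> w)^2)^2)) \<partial>M)"
      by (rule nn_integral_cong_AE) (use CE2[OF g] in \<open>eventually_elim, simp\<close>)
    finally show ?thesis .
  qed

  have keyQ: "(1/(2*S))*(z^2 + D) + S/2 - z = ((S - z)^2 + D)/(2*S)" if "S > 0" for S z D :: real
    using that by (simp add: field_simps power2_eq_square)
  have s0i: "(s0 w)^2 / (2 * s0 w) + s0 w / 2 = s0 w" for w
  proof -
    have "(s0 w)^2 / (2 * s0 w) = s0 w / 2" using s0pos[of w] by (simp add: power2_eq_square)
    then show ?thesis by simp
  qed
  have PQ: "Qobj M X Y s (\<beta>0, \<gamma>0) < Qobj M X Y s \<theta>"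
    if th: "\<theta> \<in> Theta M X a s" and ne: "\<theta> \<noteq> (\<beta>0, \<gamma>0)" for \<theta>
  proof -
    obtain \<beta> \<gamma> where tb: "\<theta> = (\<beta>, \<gamma>)" and g: "\<gamma> \<in> Theta_gamma M X a s"
      using th by (cases \<theta>) (auto simp: Theta_def)
    have Q0: "Qobj M X Y s (\<beta>0, \<gamma>0) = (\<integral>\<^sup>+w. ennreal (s0 w) \<partial>M)"
      unfolding OBJQ[OF g0] by (rule nn_integral_cong) (simp add: s0_def[symmetric] s0i)
    let ?g = "\<lambda>w. (1 / (2 * SG \<gamma> w)) * ((s0 w)^2 + (X w \<bullet> (\<beta>0 - \<beta>))^2) + SG \<gamma> w / 2"
    have "(\<integral>\<^sup>+w. ennreal (s0 w) \<partial>M) < (\<integral>\<^sup>+w. ennreal (?g w) \<partial>M)"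
    proof (rule nn_strict)
      show "s0 \<in> borel_measurable M" by measurable
      show "?g \<in> borel_measurable M" by measurable
      show "integrable M s0" by (rule s01)
      show "AE w in M. 0 \<le> s0 w" by (simp add: s0pos less_imp_le)
      show "AE w in M. s0 w \<le> ?g w"
      proof (intro AE_I2)
        fix w
        have "?g w - s0 w = ((SG \<gamma> w - s0 w)^2 + (X w \<bullet> (\<beta>0 - \<beta>))^2)/(2*SG \<gamma> w)"
          by (rule keyQ[OF SGpos])
        moreover have "0 \<le> ((SG \<gamma> w - s0 w)^2 + (X w \<bullet> (\<beta>0 - \<beta>))^2)/(2*SG \<gamma> w)"
          using SGpos[of \<gamma> w] by simp
        ultimately show "s0 w \<le> ?g w" by linarith
      qed
      show "\<not> (AE w in M. ?g w \<le> s0 w)"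
      proof
        assume A: "AE w in M. ?g w \<le> s0 w"
        have B: "AE w in M. SG \<gamma> w = s0 w \<and> X w \<bullet> (\<beta>0 - \<beta>) = 0" using A
        proof eventually_elim
          case (elim w)
          have "?g w - s0 w = ((SG \<gamma> w - s0 w)^2 + (X w \<bullet> (\<beta>0 - \<beta>))^2)/(2*SG \<gamma> w)"
            by (rule keyQ[OF SGpos])
          with elim have "((SG \<gamma> w - s0 w)^2 + (X w \<bullet> (\<beta>0 - \<beta>))^2)/(2*SG \<gamma> w) \<le> 0" by linarith
          then have "(SG \<gamma> w - s0 w)^2 + (X w \<bullet> (\<beta>0 - \<beta>))^2 \<le> 0"
            using SGpos[of \<gamma> w] by (simp add: divide_le_0_iff)
          then have "(SG \<gamma> w - s0 w)^2 = 0 \<and> (X w \<bullet> (\<beta>0 - \<beta>))^2 = 0"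
            by (smt (verit) zero_le_power2)
          then show ?case by simp
        qed
        have "\<gamma> = \<gamma>0" by (rule IDG[OF g]) (use B in auto)
        moreover have "\<beta>0 - \<beta> = 0" by (rule ident0) (use B in auto)
        ultimately show False using ne tb by simp
      qed
    qed
    then show ?thesis using Q0 OBJQ[OF g, of \<beta>] tb by simp
  qed
  have P1: "step1obj M X Y \<beta>0 < step1obj M X Y \<beta>" if ne: "\<beta> \<noteq> \<beta>0" for \<beta>
  proof -
    have S0: "step1obj M X Y \<beta>0 = (\<integral>\<^sup>+w. ennreal (s0 w) \<partial>M)"
      unfolding OBJ1 by (rule nn_integral_cong) (use s0pos in \<open>simp add: power2_eq_square\<close>)
    let ?g = "\<lambda>w. (1 / s0 w) * ((s0 w)^2 + (X w \<bullet> (\<beta>0 - \<beta>))^2)"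
    have gg: "?g w = s0 w + (X w \<bullet> (\<beta>0 - \<beta>))^2 / s0 w" for w
      using s0pos[of w] by (simp add: field_simps power2_eq_square)
    have "(\<integral>\<^sup>+w. ennreal (s0 w) \<partial>M) < (\<integral>\<^sup>+w. ennreal (?g w) \<partial>M)"
    proof (rule nn_strict)
      show "s0 \<in> borel_measurable M" by measurable
      show "?g \<in> borel_measurable M" by measurable
      show "integrable M s0" by (rule s01)
      show "AE w in M. 0 \<le> s0 w" by (simp add: s0pos less_imp_le)
      show "AE w in M. s0 w \<le> ?g w"
      proof (intro AE_I2)
        fix w show "s0 w \<le> ?g w" unfolding gg using s0pos[of w] by simp
      qed
      show "\<not> (AE w in M. ?g w \<le> s0 w)"
      proof
        assume A: "AE w in M. ?g w \<le> s0 w"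
        have B: "AE w in M. X w \<bullet> (\<beta>0 - \<beta>) = 0" using A
        proof eventually_elim
          case (elim w)
          then have "(X w \<bullet> (\<beta>0 - \<beta>))^2 / s0 w \<le> 0" unfolding gg by simp
          then have "(X w \<bullet> (\<beta>0 - \<beta>))^2 \<le> 0" using s0pos[of w] by (simp add: divide_le_0_iff)
          then show ?case by simp
        qed
        have "\<beta>0 - \<beta> = 0" by (rule ident0[OF B])
        then show False using ne by simp
      qed
    qed
    then show ?thesis using S0 OBJ1[of \<beta>] by simp
  qed
  have P2: "step2obj M X Y s \<beta>0 \<gamma>0 < step2obj M X Y s \<beta>0 \<gamma>"
    if g: "\<gamma> \<in> Theta_gamma M X a s" and ne: "\<gamma> \<noteq> \<gamma>0" for \<gamma>
  proof -
    let ?f = "\<lambda>w. (1 / (s0 w)^3) * W w"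
    let ?g = "\<lambda>w. (1 / (s0 w)^3) * (W w + ((s0 w)^2 - (SG \<gamma> w)^2)^2)"
    have S0: "step2obj M X Y s \<beta>0 \<gamma>0 = (\<integral>\<^sup>+w. ennreal (?f w) \<partial>M)"
      unfolding OBJ2[OF g0] by (simp add: s0_def)
    have "(\<integral>\<^sup>+w. ennreal (?f w) \<partial>M) < (\<integral>\<^sup>+w. ennreal (?g w) \<partial>M)"
    proof (rule nn_strict)
      show "?f \<in> borel_measurable M" by measurable
      show "?g \<in> borel_measurable M" by measurable
      show "integrable M ?f"
      proof (rule Bochner_Integration.integrable_bound[where f="\<lambda>w. W w / c'^3"])
        show "integrable M (\<lambda>w. W w / c'^3)" using Wi by simp
        show "?f \<in> borel_measurable M" by measurable
        show "AE w in M. norm (?f w) \<le> norm (W w / c'^3)"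
          using s0c
        proof eventually_elim
          case (elim w)
          have "c'^3 \<le> (s0 w)^3" by (rule power_mono[OF elim]) (use c'0 in simp)
          then have "1 / (s0 w)^3 \<le> 1 / c'^3" using c'0 s0pos[of w] by (intro divide_left_mono) auto
          then have "1 / (s0 w)^3 * \<bar>W w\<bar> \<le> 1 / c'^3 * \<bar>W w\<bar>" by (intro mult_right_mono) auto
          then show ?case using s0pos[of w] c'0 by (simp add: abs_mult)
        qed
      qed
      show "AE w in M. 0 \<le> ?f w" using Wpos by eventually_elim (simp add: s0pos less_imp_le)
      show "AE w in M. ?f w \<le> ?g w"
        by (intro AE_I2 mult_left_mono) (simp_all add: s0pos less_imp_le)
      show "\<not> (AE w in M. ?g w \<le> ?f w)"
      proof
        assume A: "AE w in M. ?g w \<le> ?f w"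
        have B: "AE w in M. SG \<gamma> w = s0 w" using A
        proof eventually_elim
          case (elim w)
          have "?g w - ?f w = ((s0 w)^2 - (SG \<gamma> w)^2)^2 / (s0 w)^3" by (simp add: add_divide_distrib)
          with elim have "((s0 w)^2 - (SG \<gamma> w)^2)^2 / (s0 w)^3 \<le> 0" by linarith
          then have "((s0 w)^2 - (SG \<gamma> w)^2)^2 \<le> 0" using s0pos[of w] by (simp add: divide_le_0_iff)
          then have "(SG \<gamma> w)^2 = (s0 w)^2" by simp
          then show ?case using s0pos[of w] SGpos[of \<gamma> w] by (simp add: power2_eq_iff_nonneg)
        qed
        have "\<gamma> = \<gamma>0" by (rule IDG[OF g B])
        then show False using ne by simp
      qed
    qed
    then show ?thesis using S0 OBJ2[OF g] by simp
  qed

  have CEq: "AE w in M. real_cond_exp M F (\<lambda>w. (e0 w)^2 - (s0 w)^2) w = 0"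
  proof -
    have "AE w in M. real_cond_exp M F (\<lambda>w. (s0 w)^2) w = (s0 w)^2"
      by (rule real_cond_exp_F_meas[OF s02]) measurable
    then show ?thesis using real_cond_exp_diff[OF e02 s02] CEu
      by (auto elim: AE_mp)
  qed
  have ThG0: "AE w in M. X w \<bullet> \<gamma>0 \<in> sdom a" by (rule ThG[OF g0])
  define S1 where "S1 w = s1m (X w \<bullet> \<gamma>0)" for w
  have S1F[measurable]: "S1 \<in> borel_measurable F" unfolding S1_def[abs_def] by measurable
  have XiF[measurable]: "(\<lambda>w. X w $ i) \<in> borel_measurable F" for i
    by (rule measurable_compose[OF XF borel_measurable_nth])
  have AEs: "AE w in M. s (X w \<bullet> \<gamma>0) = s0 w \<and> s1 (X w \<bullet> \<gamma>0) = S1 w \<and> sigmaX M X Y w = s0 w"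
    using ThG0 sigX0 by eventually_elim (simp add: s0_def SG_def sm_def S1_def s1m_def)
  have G1: "grad_step1 M X Y \<beta>0 = 0"
    unfolding grad_step1_def vec_eq_iff
  proof (intro allI)
    fix i
    have "(\<integral>w. -2 * X w $ i * (Y w - X w \<bullet> \<beta>0) / sigmaX M X Y w \<partial>M) = 0"
    proof (rule int_zero[OF SF _ _ e0M CE0])
      show "(\<lambda>w. -2 * X w $ i / s0 w) \<in> borel_measurable F" by measurable
      show "AE w in M. -2 * X w $ i * (Y w - X w \<bullet> \<beta>0) / sigmaX M X Y w = -2 * X w $ i / s0 w * e0 w"
        using AEs by eventually_elim (simp add: e0_def)
    qed
    then show "(\<chi> i. \<integral>w. -2 * X w $ i * (Y w - X w \<bullet> \<beta>0) / sigmaX M X Y w \<partial>M) $ i = 0 $ i" by simp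
  qed
  have eqM: "(\<lambda>w. (e0 w)^2 - (s0 w)^2) \<in> borel_measurable M" by measurable
  have G2: "grad_step2 M X Y s s1 \<beta>0 \<gamma>0 = 0"
    unfolding grad_step2_def vec_eq_iff
  proof (intro allI)
    fix i
    have "(\<integral>w. -4 * ((Y w - X w \<bullet> \<beta>0)^2 - (s (X w \<bullet> \<gamma>0))^2) * s (X w \<bullet> \<gamma>0) * s1 (X w \<bullet> \<gamma>0)
                  * X w $ i / (sigmaX M X Y w)^3 \<partial>M) = 0"
    proof (rule int_zero[OF SF _ _ eqM CEq])
      show "(\<lambda>w. -4 * s0 w * S1 w * X w $ i / (s0 w)^3) \<in> borel_measurable F" by measurable
      show "AE w in M. -4 * ((Y w - X w \<bullet> \<beta>0)^2 - (s (X w \<bullet> \<gamma>0))^2) * s (X w \<bullet> \<gamma>0) * s1 (X w \<bullet> \<gamma>0)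
                  * X w $ i / (sigmaX M X Y w)^3 = -4 * s0 w * S1 w * X w $ i / (s0 w)^3 * ((e0 w)^2 - (s0 w)^2)"
        using AEs
      proof eventually_elim
        case (elim w)
        have "s0 w \<noteq> 0" using s0pos[of w] by simp
        then show ?case using elim by (simp add: e0_def field_simps)
      qed
    qed
    then show "(\<chi> i. \<integral>w. -4 * ((Y w - X w \<bullet> \<beta>0)^2 - (s (X w \<bullet> \<gamma>0))^2) * s (X w \<bullet> \<gamma>0) * s1 (X w \<bullet> \<gamma>0)
                  * X w $ i / (sigmaX M X Y w)^3 \<partial>M) $ i = 0 $ i" by simp
  qed
  have GQ1: "gradQ_beta M X Y s (\<beta>0, \<gamma>0) = 0"
    unfolding gradQ_beta_def vec_eq_iff
  proof (intro allI)
    fix i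
    have "(\<integral>w. - X w $ i * eres s (Y w) (X w) (\<beta>0, \<gamma>0) \<partial>M) = 0"
    proof (rule int_zero[OF SF _ _ e0M CE0])
      show "(\<lambda>w. - X w $ i / s0 w) \<in> borel_measurable F" by measurable
      show "AE w in M. - X w $ i * eres s (Y w) (X w) (\<beta>0, \<gamma>0) = - X w $ i / s0 w * e0 w"
        using AEs by eventually_elim (simp add: e0_def eres_def)
    qed
    then show "(\<chi> i. \<integral>w. - X w $ i * eres s (Y w) (X w) (\<beta>0, \<gamma>0) \<partial>M) $ i = 0 $ i" by simp
  qed
  have GQ2: "gradQ_gamma M X Y s s1 (\<beta>0, \<gamma>0) = 0"
    unfolding gradQ_gamma_def vec_eq_iff
  proof (intro allI)
    fix i
    have "(\<integral>w. (1/2) * (1 - (eres s (Y w) (X w) (\<beta>0, \<gamma>0))^2) * s1 (X w \<bullet> snd (\<beta>0, \<gamma>0)) * X w $ i \<partial>M) = 0"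
    proof (rule int_zero[OF SF _ _ eqM CEq])
      show "(\<lambda>w. - (1/2) * S1 w * X w $ i / (s0 w)^2) \<in> borel_measurable F" by measurable
      show "AE w in M. (1/2) * (1 - (eres s (Y w) (X w) (\<beta>0, \<gamma>0))^2) * s1 (X w \<bullet> snd (\<beta>0, \<gamma>0)) * X w $ i
          = - (1/2) * S1 w * X w $ i / (s0 w)^2 * ((e0 w)^2 - (s0 w)^2)"
        using AEs
      proof eventually_elim
        case (elim w)
        have "s0 w \<noteq> 0" using s0pos[of w] by simp
        then show ?case using elim
          by (simp add: e0_def eres_def power_divide field_simps)
      qed
    qed
    then show "(\<chi> i. \<integral>w. (1/2) * (1 - (eres s (Y w) (X w) (\<beta>0, \<gamma>0))^2) * s1 (X w \<bullet> snd (\<beta>0, \<gamma>0)) * X w $ i \<partial>M) $ i = 0 $ i" by simp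
  qed
  show ?thesis
    using PQ P1 P2 G1 G2 GQ1 GQ2 by simp
qed


end
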